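(* Let $X$ be a complex manifold and $E\to X$ a holomorphic vector bundle of rank $r$ with a qas metric $h$. For every $x_0\in X$ there are a neighborhood $U$ of $x_0$ with a trivialization $E|_U\simeq U\times\mathbb C^r_\alpha$, holomorphic $r$-tuples $f_1(x),\dots,f_m(x)$ on $U$, and a constant $C>0$ such that $$\frac1C|\alpha|_{h(x)}\le\sum_{k=1}^m|f_k(x)\cdot\alpha|\le C|\alpha|_{h(x)}\quad\text{for all }(x,\alpha)\in U\times\mathbb C^r.$$
   Context: A function $u$ with values in $[-\infty,\infty)$ is qas if it is quasi-plurisubharmonic ($\equiv-\infty$ allowed) and locally $u=\log|f|^2+b$ with $f$ a finite tuple of holomorphic functions and $b$ bounded. A singular Hermitian metric $h$ on $E$ is a function $\alpha\mapsto|\alpha|_h^2$ on the total space of $E$ restricting to a possibly degenerate positive semidefinite Hermitian form $h(x)$ on each fiber; it is qas if $\log|\alpha|^2_h$ is a qas function on the total space of $E$. Here $f_k(x)\cdot\alpha=\sum_j f_{k,j}(x)\alpha_j$. *)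

theory Defs
  imports "HOL-Analysis.Analysis" "HOL-Probability.Probability"
begin

definition holo_on :: "(complex ^ 'm) set \<Rightarrow> (complex ^ 'm \<Rightarrow> complex) \<Rightarrow> bool" where
  "holo_on V f \<longleftrightarrow> (\<forall>z\<in>V. \<exists>L. (f has_derivative L) (at z) \<and> (\<forall>c v. L (c *s v) = c * L v))"

text \<open>Real C-infinity functions (coinductive: differentiable, with all directional
  derivatives again of the same kind).\<close>
definition smooth_on :: "(complex ^ 'm) set \<Rightarrow> (complex ^ 'm \<Rightarrow> real) \<Rightarrow> bool" where
  "smooth_on V g \<longleftrightarrow> (\<exists>S. g \<in> S \<and>
     (\<forall>\<phi>\<in>S. \<forall>v. \<exists>\<psi>\<in>S. \<forall>z\<in>V. \<exists>L. (\<phi> has_derivative L) (at z) \<and> L v = \<psi> z))"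

definition usc_on :: "(complex ^ 'm) set \<Rightarrow> (complex ^ 'm \<Rightarrow> ereal) \<Rightarrow> bool" where
  "usc_on W u \<longleftrightarrow> (\<forall>z\<in>W. \<forall>c. u z < c \<longrightarrow> (\<forall>\<^sub>F w in at z. u w < c))"

text \<open>Mean value of an ereal function over [0, 2 pi] (well defined in [-inf,inf) for
  functions bounded above).\<close>
definition circle_mean :: "(real \<Rightarrow> ereal) \<Rightarrow> ereal" where
  "circle_mean g =
     (enn2ereal (\<integral>\<^sup>+ \<theta>. e2ennreal (max 0 (g \<theta>)) * indicator {0..2*pi} \<theta> \<partial>lborel)
      - enn2ereal (\<integral>\<^sup>+ \<theta>. e2ennreal (max 0 (- g \<theta>)) * indicator {0..2*pi} \<theta> \<partial>lborel))
     * ereal (1 / (2*pi))"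

text \<open>Plurisubharmonic (identically -infinity allowed): upper semicontinuous, never +infinity,
  sub-mean-value property on every closed complex disc contained in W.\<close>
definition psh_on :: "(complex ^ 'm) set \<Rightarrow> (complex ^ 'm \<Rightarrow> ereal) \<Rightarrow> bool" where
  "psh_on W u \<longleftrightarrow> (\<forall>z\<in>W. u z \<noteq> \<infinity>) \<and> usc_on W u \<and>
     (\<forall>a v. (\<forall>\<zeta>. cmod \<zeta> \<le> 1 \<longrightarrow> a + \<zeta> *s v \<in> W) \<longrightarrow>
        u a \<le> circle_mean (\<lambda>\<theta>. u (a + cis \<theta> *s v)))"

definition qpsh_on :: "(complex ^ 'm) set \<Rightarrow> (complex ^ 'm \<Rightarrow> ereal) \<Rightarrow> bool" where
  "qpsh_on W u \<longleftrightarrow> (\<forall>p\<in>W. \<exists>V g. open V \<and> p \<in> V \<and> V \<subseteq> W \<and> smooth_on V g \<and>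
      psh_on V (\<lambda>z. u z - ereal (g z)))"

definition elog :: "real \<Rightarrow> ereal" where
  "elog t = (if t = 0 then - \<infinity> else ereal (ln t))"

definition qas_on :: "(complex ^ 'm) set \<Rightarrow> (complex ^ 'm \<Rightarrow> ereal) \<Rightarrow> bool" where
  "qas_on W u \<longleftrightarrow> qpsh_on W u \<and>
    (\<forall>p\<in>W. \<exists>V fs b. open V \<and> p \<in> V \<and> V \<subseteq> W \<and>
        (\<forall>f\<in>set fs. holo_on V f) \<and> bounded (b ` V) \<and>
        (\<forall>z\<in>V. u z = elog (\<Sum>f\<leftarrow>fs. (cmod (f z))\<^sup>2) + ereal (b z)))"

text \<open>Total space of the trivial bundle: coordinates indexed by 'n + 'r.\<close>
definition joinv :: "complex ^ 'n::finite \<Rightarrow> complex ^ 'r::finite \<Rightarrow> complex ^ ('n + 'r)" where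
  "joinv x a = (\<chi> i. case i of Inl j \<Rightarrow> x $ j | Inr k \<Rightarrow> a $ k)"

definition basept :: "complex ^ ('n::finite + 'r::finite) \<Rightarrow> complex ^ 'n" where
  "basept w = (\<chi> j. w $ Inl j)"

definition fibpt :: "complex ^ ('n::finite + 'r::finite) \<Rightarrow> complex ^ 'r" where
  "fibpt w = (\<chi> k. w $ Inr k)"

definition total_space :: "(complex ^ 'n::finite) set \<Rightarrow> (complex ^ ('n + 'r::finite)) set" where
  "total_space \<Omega> = {w. basept w \<in> \<Omega>}"

text \<open>Hermitian metric given by a matrix H(x); |alpha|^2_{h(x)} = sum conj(alpha_j) H_jk alpha_k.\<close>
definition herm_psd :: "complex ^ 'r ^ 'r \<Rightarrow> bool" where
  "herm_psd A \<longleftrightarrow> (\<forall>j k. A $ j $ k = cnj (A $ k $ j)) \<and>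
     (\<forall>a. 0 \<le> Re (\<Sum>j\<in>UNIV. \<Sum>k\<in>UNIV. cnj (a $ j) * A $ j $ k * a $ k))"

definition hnorm2 :: "complex ^ 'r ^ 'r \<Rightarrow> complex ^ 'r \<Rightarrow> real" where
  "hnorm2 A a = Re (\<Sum>j\<in>UNIV. \<Sum>k\<in>UNIV. cnj (a $ j) * A $ j $ k * a $ k)"

definition cdot :: "complex ^ 'r \<Rightarrow> complex ^ 'r \<Rightarrow> complex" where
  "cdot f a = (\<Sum>j\<in>UNIV. f $ j * a $ j)"

end

theory Submission
  imports Defs "HOL-Complex_Analysis.Cauchy_Integral_Formula"
begin


definition Df :: "(complex ^ 'm \<Rightarrow> complex) \<Rightarrow> complex ^ 'm \<Rightarrow> complex ^ 'm \<Rightarrow> complex" where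
  "Df F z = frechet_derivative F (at z)"

lemma ofreal_smult: "(of_real a :: complex) *s (v::complex^'m) = a *\<^sub>R v"
  by (simp add: vec_eq_iff) (simp add: scaleR_conv_of_real)

lemma norm_smult_vec: "norm (c *s (v::complex^'m)) = cmod c * norm v"
  unfolding norm_vec_def by (simp add: norm_mult L2_set_right_distrib)

lemma bl_smult: "bounded_linear (\<lambda>s::complex. s *s (u::complex^'m))"
proof -
  have "linear (\<lambda>s::complex. s *s u)"
    apply (rule linearI) by (simp_all add: vec_eq_iff)
  thus ?thesis using linear_conv_bounded_linear by blast
qed

lemma holo_D:
  assumes "holo_on V F" "z \<in> V"
  shows "(F has_derivative Df F z) (at z)"
    and "Df F z (c *s v) = c * Df F z v"
proof -
  obtain L where L: "(F has_derivative L) (at z)" "\<And>c v. L (c *s v) = c * L v"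
    using assms unfolding holo_on_def by blast
  have "L = Df F z" unfolding Df_def using L(1) by (rule frechet_derivative_at)
  thus "(F has_derivative Df F z) (at z)" "Df F z (c *s v) = c * Df F z v" using L by auto
qed

lemma holo_D_lin:
  assumes "holo_on V F" "z \<in> V"
  shows "linear (Df F z)"
  using has_derivative_bounded_linear[OF holo_D(1)[OF assms]] bounded_linear.linear by blast

lemma holo_line:
  assumes "holo_on V F" "w + s *s u \<in> V"
  shows "((\<lambda>s. F (w + s *s u)) has_field_derivative Df F (w + s *s u) u) (at s)"
proof -
  have d1: "((\<lambda>s. w + s *s u) has_derivative (\<lambda>h. h *s u)) (at s)"
    using has_derivative_add[OF has_derivative_const bounded_linear_imp_has_derivative[OF bl_smult]]
    by simp
  have "((F \<circ> (\<lambda>s. w + s *s u)) has_derivative (Df F (w + s *s u) \<circ> (\<lambda>h. h *s u))) (at s)"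
    by (rule diff_chain_at[OF d1 holo_D(1)[OF assms]])
  moreover have "(Df F (w + s *s u) \<circ> (\<lambda>h. h *s u)) = (*) (Df F (w + s *s u) u)"
    using holo_D(2)[OF assms] by (auto simp: fun_eq_iff mult.commute)
  ultimately show ?thesis unfolding has_field_derivative_def by (simp add: o_def)
qed

lemma holo_cont_line:
  assumes "holo_on V F" "\<And>s. s \<in> S \<Longrightarrow> w + s *s u \<in> V"
  shows "continuous_on S (\<lambda>s. F (w + s *s u))"
proof (rule continuous_at_imp_continuous_on, intro ballI)
  fix s assume "s \<in> S"
  from holo_line[OF assms(1) assms(2)[OF this]] show "isCont (\<lambda>s. F (w + s *s u)) s"
    using DERIV_isCont by blast
qed

lemma taylor1:
  fixes g :: "complex \<Rightarrow> complex"
  assumes hol: "g holomorphic_on ball 0 (3*d)" and d: "d > 0"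
    and M: "\<And>s. s \<in> ball 0 (3*d) \<Longrightarrow> cmod (g s) \<le> M"
    and s: "cmod s \<le> d"
  shows "cmod (g s - g 0 - deriv g 0 * s) \<le> 2*M/d^2 * (cmod s)^2"
proof -
  let ?S = "cball (0::complex) d"
  have B: "cmod ((deriv^^(Suc 1)) g x) \<le> 2*M/d^2" if "x \<in> ?S" for x
  proof -
    have sub: "cball x d \<subseteq> ball 0 (3*d)"
    proof
      fix y assume "y \<in> cball x d"
      then have "norm (y - x) \<le> d" "norm x \<le> d" using that by (auto simp: dist_norm norm_minus_commute)
      then have "norm y < 3*d" using norm_triangle_ineq[of "y-x" x] d by simp
      then show "y \<in> ball 0 (3*d)" by simp
    qed
    have "cmod ((deriv ^^ 2) g x) \<le> fact 2 * M / d^2"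
    proof (rule Cauchy_inequality)
      show "g holomorphic_on ball x d" using holomorphic_on_subset[OF hol] sub ball_subset_cball by blast
      show "continuous_on (cball x d) g"
        using holomorphic_on_imp_continuous_on[OF hol] continuous_on_subset sub by blast
      show "0 < d" by fact
      show "cmod (g y) \<le> M" if "cmod (x - y) = d" for y
        using M sub that by (auto simp: dist_norm)
    qed
    thus ?thesis by (simp add: numeral_2_eq_2)
  qed
  have "cmod ((deriv^^0) g s - (\<Sum>i\<le>1. (deriv^^i) g 0 * (s - 0)^i / fact i)) \<le> 2*M/d^2 * cmod (s-0)^Suc 1 / fact 1"
  proof (rule complex_Taylor[where f="\<lambda>i. (deriv^^i) g" and S="?S"])
    show "convex ?S" by simp
    show "((deriv ^^ i) g has_field_derivative (deriv ^^ Suc i) g x) (at x within ?S)"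
      if "x \<in> ?S" "i \<le> 1" for i x
    proof -
      have "x \<in> ball 0 (3*d)" using that d by auto
      then show ?thesis
        using holomorphic_derivI[OF holomorphic_higher_deriv[OF hol] open_ball, of x i] by simp
    qed
    show "cmod ((deriv ^^ Suc 1) g x) \<le> 2 * M / d\<^sup>2" if "x \<in> ?S" for x using B that by blast
    show "0 \<in> ?S" using d by simp
    show "s \<in> ?S" using s by simp
  qed
  thus ?thesis by (simp add: power2_eq_square algebra_simps atMost_Suc)
qed

lemma taylor_multi:
  assumes hol: "holo_on V F" and sub: "ball w (3*d) \<subseteq> V" and d: "d > 0"
    and M: "\<And>z. z \<in> ball w (3*d) \<Longrightarrow> cmod (F z) \<le> M"
    and y: "norm y \<le> d"
  shows "cmod (F (w + y) - F w - Df F w y) \<le> 2*M/d^2 * (norm y)^2"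
proof (cases "y = 0")
  case True
  have wV: "w \<in> V" using sub d by auto
  have "Df F w y = 0" using holo_D(2)[OF hol wV, of 0 0] True by simp
  then show ?thesis using True by simp
next
  case False
  define u where "u = (1/norm y) *\<^sub>R y"
  have nu: "norm u = 1" using False by (simp add: u_def)
  define g where "g = (\<lambda>s. F (w + s *s u))"
  have inV: "w + s *s u \<in> V" if "s \<in> ball 0 (3*d)" for s
    using that sub nu by (auto simp: dist_norm norm_smult_vec)
  have hol_g: "g holomorphic_on ball 0 (3*d)"
    unfolding holomorphic_on_def field_differentiable_def g_def
    using holo_line[OF hol inV] has_field_derivative_at_within by blast
  have w0: "w + 0 *s u = w" by (simp add: vec_eq_iff)
  have dg: "deriv g 0 = Df F w u"
    using DERIV_imp_deriv[OF holo_line[OF hol inV[of 0]]] d w0 unfolding g_def by simp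
  have ys: "of_real (norm y) *s u = y" using False by (simp add: ofreal_smult u_def)
  have Mg: "cmod (g s) \<le> M" if "s \<in> ball 0 (3*d)" for s
    using M that nu by (auto simp: g_def dist_norm norm_smult_vec)
  have "cmod (g (of_real (norm y)) - g 0 - deriv g 0 * of_real (norm y))
        \<le> 2*M/d^2 * (cmod (of_real (norm y)))^2"
    by (rule taylor1[OF hol_g d Mg]) (use y in auto)
  moreover have "g (of_real (norm y)) = F (w + y)" using ys by (simp add: g_def)
  moreover have "g 0 = F w" using w0 by (simp add: g_def)
  moreover have "deriv g 0 * of_real (norm y) = Df F w y"
    using holo_D(2)[OF hol inV[of 0], of "of_real (norm y)" u] d ys w0 dg by (simp add: mult.commute)
  ultimately show ?thesis by simp
qed



lemma holo_dir_deriv: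
  assumes hol: "holo_on V F" and V: "open V"
  shows "holo_on V (\<lambda>z. Df F z v)"
  unfolding holo_on_def
proof
  fix z1 assume z1: "z1 \<in> V"
  obtain r where r: "r > 0" "cball z1 r \<subseteq> V" using open_contains_cball V z1 by blast
  have contF: "continuous_on V F"
    by (rule continuous_at_imp_continuous_on) (use holo_D(1)[OF hol] has_derivative_continuous in blast)
  obtain M where M: "M \<ge> 0" "\<And>z. z \<in> cball z1 r \<Longrightarrow> cmod (F z) \<le> M"
    using continuous_on_compact_bound[OF compact_cball continuous_on_subset[OF contF r(2)]] by blast
  define d where "d = r/8"
  define \<rho> where "\<rho> = r / (4*(norm v + 1))"
  define K where "K = 2*M/d^2"
  have d: "d > 0" using r by (simp add: d_def)
  have \<rho>: "\<rho> > 0" unfolding \<rho>_def using r by (intro divide_pos_pos) (auto intro: add_nonneg_pos)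
  have \<rho>v: "\<rho> * norm v < r/4"
  proof -
    have "\<rho> * norm v = r/4 * (norm v / (norm v + 1))" by (simp add: \<rho>_def field_simps)
    also have "... < r/4 * 1"
    proof (rule mult_strict_left_mono)
      show "norm v / (norm v + 1) < 1" by (smt (verit) divide_less_eq_1 norm_ge_zero)
    qed (use r in auto)
    finally show ?thesis by simp
  qed
  have K: "K \<ge> 0" using M d by (simp add: K_def)
  let ?\<gamma> = "circlepath (0::complex) \<rho>"
  have inball: "z + \<tau> *s v \<in> ball z1 r" if "norm (z - z1) < r/2" "cmod \<tau> \<le> \<rho>" for z \<tau>
  proof -
    have "norm (\<tau> *s v) \<le> \<rho> * norm v" using that(2) by (simp add: norm_smult_vec mult_right_mono)
    then have "norm ((z - z1) + \<tau> *s v) < r"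
      using that(1) \<rho>v norm_triangle_ineq[of "z - z1" "\<tau> *s v"] r(1) by linarith
    moreover have "z1 - (z + \<tau> *s v) = - ((z - z1) + \<tau> *s v)" by (simp add: algebra_simps)
    then have "norm (z1 - (z + \<tau> *s v)) = norm ((z - z1) + \<tau> *s v)" by (metis norm_minus_cancel)
    ultimately show ?thesis by (simp add: dist_norm)
  qed
  have inV: "z + \<tau> *s v \<in> V" if "norm (z - z1) < r/2" "cmod \<tau> \<le> \<rho>" for z \<tau>
    using inball[OF that] r(2) by auto
  have wV: "z1 + \<tau> *s v \<in> V" if "cmod \<tau> \<le> \<rho>" for \<tau>
    using inV[of z1 \<tau>] that r by simp
  have cauchy: "(\<lambda>\<tau>. F (z + \<tau> *s v) / \<tau>^2) contour_integrable_on ?\<gamma> \<and>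
       Df F z v = 1 / (2 * of_real pi * \<i>) * contour_integral ?\<gamma> (\<lambda>\<tau>. F (z + \<tau> *s v) / \<tau>^2)"
    if zz: "norm (z - z1) < r/2" for z
  proof -
    have iV: "z + \<tau> *s v \<in> V" if "cmod \<tau> \<le> \<rho>" for \<tau> using inV[OF zz that] .
    have cont: "continuous_on (cball 0 \<rho>) (\<lambda>\<tau>. F (z + \<tau> *s v))"
      by (rule holo_cont_line[OF hol]) (use iV in auto)
    have holf: "(\<lambda>\<tau>. F (z + \<tau> *s v)) holomorphic_on ball 0 \<rho>"
      unfolding holomorphic_on_def field_differentiable_def
    proof
      fix x :: complex assume "x \<in> ball 0 \<rho>"
      then have "cmod x \<le> \<rho>" by simp
      from has_field_derivative_at_within[OF holo_line[OF hol iV[OF this]]]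
      show "\<exists>f'. ((\<lambda>\<tau>. F (z + \<tau> *s v)) has_field_derivative f') (at x within ball 0 \<rho>)" by blast
    qed
    have c0: "0 \<in> ball (0::complex) \<rho>" using \<rho> by simp
    note C = Cauchy_derivative_integral_circlepath[OF cont holf c0]
    have z0: "z + 0 *s v = z" by (simp add: vec_eq_iff)
    have "((\<lambda>\<tau>. F (z + \<tau> *s v)) has_field_derivative Df F z v) (at 0)"
      using holo_line[OF hol iV[of 0]] \<rho> z0 by simp
    from DERIV_unique[OF this C(2)]
    show ?thesis using C(1) by simp
  qed
  have tay: "cmod (F (w + y) - F w - Df F w y) \<le> K * (norm y)^2"
    if "w = z1 + \<tau> *s v" "cmod \<tau> \<le> \<rho>" "norm y \<le> d" for w \<tau> y
  proof -
    have sb: "ball w (3*d) \<subseteq> cball z1 r"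
    proof
      fix x assume "x \<in> ball w (3*d)"
      then have "norm (x - w) < 3*d" by (simp add: dist_norm norm_minus_commute)
      moreover have "norm (w - z1) \<le> \<rho> * norm v"
        using that(1,2) by (simp add: norm_smult_vec mult_right_mono)
      ultimately have "norm ((x - w) + (w - z1)) < r"
        using \<rho>v norm_triangle_ineq[of "x - w" "w - z1"] r(1) by (simp add: d_def)
      moreover have "x - z1 = (x - w) + (w - z1)" by simp
      ultimately have "norm (x - z1) < r" by metis
      thus "x \<in> cball z1 r" by (simp add: dist_norm norm_minus_commute)
    qed
    have "cmod (F (w + y) - F w - Df F w y) \<le> 2*M/d^2 * (norm y)^2"
    proof (rule taylor_multi[OF hol _ d])
      show "ball w (3 * d) \<subseteq> V" using sb r(2) by blast
      show "cmod (F z) \<le> M" if "z \<in> ball w (3 * d)" for z using sb that M(2) by blast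
    qed (use that(3) in auto)
    then show ?thesis by (simp add: K_def)
  qed
  have contD: "continuous_on (sphere 0 \<rho>) (\<lambda>\<tau>. Df F (z1 + \<tau> *s v) y)" for y
  proof -
    define fn where "fn = (\<lambda>n::nat. \<lambda>\<tau>. of_real (real (Suc n)) *
        (F (z1 + \<tau> *s v + (1/real (Suc n)) *\<^sub>R y) - F (z1 + \<tau> *s v)))"
    obtain N1 :: nat where N1: "norm y / d < N1" using reals_Archimedean2 by blast
    obtain N2 :: nat where N2: "K * (norm y)^2 < N2" using reals_Archimedean2 by blast
    have small: "norm ((1/real (Suc n)) *\<^sub>R y) \<le> d" if "n \<ge> N1" for n
    proof -
      have "norm y / d < real (Suc n)" using N1 that by linarith
      then have "norm y < real (Suc n) * d" using d by (simp add: field_simps)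
      then show ?thesis by (simp add: field_simps)
    qed
    have c1: "\<forall>\<^sub>F n in sequentially. continuous_on (sphere 0 \<rho>) (fn n)"
    proof (rule eventually_sequentiallyI[of N1])
      fix n assume n: "N1 \<le> n"
      let ?a = "(1/real (Suc n)) *\<^sub>R y"
      have e: "\<And>\<tau>. z1 + \<tau> *s v + ?a = (z1 + ?a) + \<tau> *s v" by (simp add: algebra_simps)
      have "continuous_on (sphere 0 \<rho>) (\<lambda>\<tau>. F ((z1 + ?a) + \<tau> *s v))"
      proof (rule holo_cont_line[OF hol])
        fix \<tau> :: complex assume "\<tau> \<in> sphere 0 \<rho>"
        then have "cmod \<tau> \<le> \<rho>" by simp
        moreover have na: "norm ?a \<le> r/8" using small[OF n] by (simp only: d_def)
        then have "norm (z1 + ?a - z1) < r/2" using r(1) by (simp only: add_diff_cancel_left')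
        ultimately show "z1 + ?a + \<tau> *s v \<in> V" using inV by blast
      qed
      moreover have "continuous_on (sphere 0 \<rho>) (\<lambda>\<tau>. F (z1 + \<tau> *s v))"
        by (rule holo_cont_line[OF hol]) (use wV in auto)
      ultimately show "continuous_on (sphere 0 \<rho>) (fn n)"
        unfolding fn_def e by (intro continuous_intros)
    qed
    have c2: "uniform_limit (sphere 0 \<rho>) fn (\<lambda>\<tau>. Df F (z1 + \<tau> *s v) y) sequentially"
    proof (rule uniform_limitI)
      fix e :: real assume e: "e > 0"
      obtain N3 :: nat where N3: "K * (norm y)^2 / e < N3" using reals_Archimedean2 by blast
      show "\<forall>\<^sub>F n in sequentially. \<forall>\<tau>\<in>sphere 0 \<rho>. dist (fn n \<tau>) (Df F (z1 + \<tau> *s v) y) < e"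
      proof (rule eventually_sequentiallyI[of "max N1 N3"], intro ballI)
        fix n \<tau> assume n: "max N1 N3 \<le> n" and \<tau>: "\<tau> \<in> sphere (0::complex) \<rho>"
        define c where "c = real (Suc n)"
        define w where "w = z1 + \<tau> *s v"
        have c: "c > 0" by (simp add: c_def)
        have wv: "w \<in> V" using wV \<tau> by (simp add: w_def)
        have ya: "(1/c) *\<^sub>R y = of_real (1/c) *s y" by (simp only: ofreal_smult)
        have lin: "Df F w ((1/c) *\<^sub>R y) = of_real (1/c) * Df F w y"
          unfolding ya by (rule holo_D(2)[OF hol wv])
        have "fn n \<tau> - Df F w y = of_real c * (F (w + (1/c) *\<^sub>R y) - F w - Df F w ((1/c) *\<^sub>R y))"
        proof -
          have nz: "(1 + complex_of_nat n) \<noteq> 0" by (metis add.commute of_nat_Suc of_nat_eq_0_iff nat.distinct(1))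
          show ?thesis unfolding lin
            by (simp add: fn_def c_def w_def algebra_simps) (simp add: nz divide_eq_eq algebra_simps)
        qed
        then have "cmod (fn n \<tau> - Df F w y) = c * cmod (F (w + (1/c) *\<^sub>R y) - F w - Df F w ((1/c) *\<^sub>R y))"
          using c by (simp add: norm_mult)
        also have "\<dots> \<le> c * (K * (norm ((1/c) *\<^sub>R y))^2)"
          using tay[OF w_def _ small] \<tau> n c by (intro mult_left_mono) (auto simp: c_def)
        also have "\<dots> = K * (norm y)^2 / c" using c by (simp add: power2_eq_square field_simps)
        also have "\<dots> < e"
        proof -
          have "K * (norm y)^2 / e < c" using N3 n by (simp add: c_def)
          then show ?thesis using c e by (simp add: field_simps)
        qed
        finally show "dist (fn n \<tau>) (Df F (z1 + \<tau> *s v) y) < e" by (simp add: dist_norm w_def)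
      qed
    qed
    show ?thesis by (rule uniform_limit_theorem[OF c1 c2]) simp
  qed
  define cc where "cc = (1 / (2 * of_real pi * \<i>) :: complex)"
  define \<Lambda> where "\<Lambda> = (\<lambda>y. cc * contour_integral ?\<gamma> (\<lambda>\<tau>. Df F (z1 + \<tau> *s v) y / \<tau>^2))"
  have pim: "path_image ?\<gamma> = sphere 0 \<rho>" using \<rho> by (simp add: path_image_circlepath_nonneg)
  have intD: "(\<lambda>\<tau>. Df F (z1 + \<tau> *s v) y / \<tau>^2) contour_integrable_on ?\<gamma>" for y
  proof (rule contour_integrable_continuous_circlepath)
    show "continuous_on (path_image ?\<gamma>) (\<lambda>\<tau>. Df F (z1 + \<tau> *s v) y / \<tau>^2)"
      unfolding pim using \<rho> by (intro continuous_on_divide contD continuous_intros) auto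
  qed
  have onC: "cmod \<tau> \<le> \<rho>" if "\<tau> \<in> path_image ?\<gamma>" for \<tau> using that pim \<rho> by simp
  have Lsc: "\<Lambda> (a *s y) = a * \<Lambda> y" for a y
  proof -
    have "contour_integral ?\<gamma> (\<lambda>\<tau>. Df F (z1 + \<tau> *s v) (a *s y) / \<tau>^2)
        = contour_integral ?\<gamma> (\<lambda>\<tau>. a * (Df F (z1 + \<tau> *s v) y / \<tau>^2))"
      by (rule contour_integral_eq) (simp add: holo_D(2)[OF hol wV[OF onC]])
    also have "\<dots> = a * contour_integral ?\<gamma> (\<lambda>\<tau>. Df F (z1 + \<tau> *s v) y / \<tau>^2)"
      by (rule contour_integral_lmul[OF intD])
    finally show ?thesis by (simp add: \<Lambda>_def)
  qed
  have Ladd: "\<Lambda> (y1 + y2) = \<Lambda> y1 + \<Lambda> y2" for y1 y2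
  proof -
    have "contour_integral ?\<gamma> (\<lambda>\<tau>. Df F (z1 + \<tau> *s v) (y1 + y2) / \<tau>^2)
        = contour_integral ?\<gamma> (\<lambda>\<tau>. Df F (z1 + \<tau> *s v) y1 / \<tau>^2 + Df F (z1 + \<tau> *s v) y2 / \<tau>^2)"
    proof (rule contour_integral_eq)
      fix \<tau> assume "\<tau> \<in> path_image ?\<gamma>"
      then have "linear (Df F (z1 + \<tau> *s v))" using holo_D_lin[OF hol wV[OF onC]] by blast
      then show "Df F (z1 + \<tau> *s v) (y1 + y2) / \<tau>^2 = Df F (z1 + \<tau> *s v) y1 / \<tau>^2 + Df F (z1 + \<tau> *s v) y2 / \<tau>^2"
        by (simp add: linear_add add_divide_distrib)
    qed
    also have "\<dots> = contour_integral ?\<gamma> (\<lambda>\<tau>. Df F (z1 + \<tau> *s v) y1 / \<tau>^2) + contour_integral ?\<gamma> (\<lambda>\<tau>. Df F (z1 + \<tau> *s v) y2 / \<tau>^2)"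
      by (rule contour_integral_add[OF intD intD])
    finally show ?thesis by (simp add: \<Lambda>_def distrib_left)
  qed
  have blL: "bounded_linear \<Lambda>"
  proof -
    have "linear \<Lambda>"
    proof (rule linearI)
      show "\<Lambda> (b1 + b2) = \<Lambda> b1 + \<Lambda> b2" for b1 b2 by (rule Ladd)
      show "\<Lambda> (r *\<^sub>R b) = r *\<^sub>R \<Lambda> b" for r b
      proof -
        have "r *\<^sub>R \<Lambda> b = of_real r * \<Lambda> b" by (simp add: scaleR_conv_of_real)
        with Lsc[of "of_real r" b] show ?thesis by (simp only: ofreal_smult)
      qed
    qed
    thus ?thesis using linear_conv_bounded_linear by blast
  qed
  have est: "cmod (Df F (z1 + y) v - Df F z1 v - \<Lambda> y) \<le> K * (norm y)^2 / \<rho>"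
    if y: "norm y < min d (r/2)" for y
  proof -
    have y1: "norm ((z1 + y) - z1) < r/2" using y by simp
    have y0: "norm (z1 - z1) < r/2" using r by simp
    note A = cauchy[OF y1] and B = cauchy[OF y0]
    let ?A = "\<lambda>\<tau>. F (z1 + y + \<tau> *s v) / \<tau>^2"
    let ?B = "\<lambda>\<tau>. F (z1 + \<tau> *s v) / \<tau>^2"
    let ?C = "\<lambda>\<tau>. Df F (z1 + \<tau> *s v) y / \<tau>^2"
    have iA: "?A contour_integrable_on ?\<gamma>" using A by simp
    have iB: "?B contour_integrable_on ?\<gamma>" using B by simp
    have iAB: "(\<lambda>\<tau>. ?A \<tau> - ?B \<tau>) contour_integrable_on ?\<gamma>" by (rule contour_integrable_diff[OF iA iB])
    have iABC: "(\<lambda>\<tau>. ?A \<tau> - ?B \<tau> - ?C \<tau>) contour_integrable_on ?\<gamma>" by (rule contour_integrable_diff[OF iAB intD])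
    have eq: "Df F (z1 + y) v - Df F z1 v - \<Lambda> y = cc * contour_integral ?\<gamma> (\<lambda>\<tau>. ?A \<tau> - ?B \<tau> - ?C \<tau>)"
    proof -
      have e1: "contour_integral ?\<gamma> (\<lambda>\<tau>. ?A \<tau> - ?B \<tau> - ?C \<tau>) = contour_integral ?\<gamma> ?A - contour_integral ?\<gamma> ?B - contour_integral ?\<gamma> ?C"
        by (simp only: contour_integral_diff[OF iAB intD[of y]] contour_integral_diff[OF iA iB])
      have dA: "Df F (z1 + y) v = cc * contour_integral ?\<gamma> ?A" unfolding cc_def using A by blast
      have dB: "Df F z1 v = cc * contour_integral ?\<gamma> ?B" unfolding cc_def using B by simp
      show ?thesis unfolding dA dB e1 \<Lambda>_def by (simp add: right_diff_distrib)
    qed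
    have bnd: "cmod (contour_integral ?\<gamma> (\<lambda>\<tau>. ?A \<tau> - ?B \<tau> - ?C \<tau>)) \<le> (K * (norm y)^2 / \<rho>^2) * (2*pi*\<rho>)"
    proof (rule has_contour_integral_bound_circlepath[OF has_contour_integral_integral[OF iABC]])
      show "0 \<le> K * (norm y)^2 / \<rho>^2" using K by simp
      show "0 < \<rho>" by fact
      fix x :: complex assume x: "cmod (x - 0) = \<rho>"
      have "?A x - ?B x - ?C x = (F ((z1 + x *s v) + y) - F (z1 + x *s v) - Df F (z1 + x *s v) y) / x^2"
        by (simp add: algebra_simps diff_divide_distrib add_divide_distrib)
      then have "cmod (?A x - ?B x - ?C x) = cmod (F ((z1 + x *s v) + y) - F (z1 + x *s v) - Df F (z1 + x *s v) y) / \<rho>^2"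
        using x by (simp add: norm_divide norm_power)
      also have "\<dots> \<le> K * (norm y)^2 / \<rho>^2"
        using tay[OF refl, of x y] x y by (intro divide_right_mono) auto
      finally show "cmod (?A x - ?B x - ?C x) \<le> K * (norm y)^2 / \<rho>^2" .
    qed
    have ncc: "cmod cc = 1/(2*pi)" by (simp add: cc_def norm_divide norm_mult)
    have "cmod (Df F (z1 + y) v - Df F z1 v - \<Lambda> y) \<le> 1/(2*pi) * ((K * (norm y)^2 / \<rho>^2) * (2*pi*\<rho>))"
      unfolding eq norm_mult ncc using bnd by (intro mult_left_mono) auto
    also have "\<dots> = K * (norm y)^2 / \<rho>" using \<rho> by (simp add: power2_eq_square field_simps)
    finally show ?thesis .
  qed
  have "((\<lambda>z. Df F z v) has_derivative \<Lambda>) (at z1)"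
    unfolding has_derivative_at'
  proof (intro conjI blL allI impI)
    fix e :: real assume e: "e > 0"
    define \<delta> where "\<delta> = min (min d (r/2)) (e * \<rho> / (K + 1))"
    have \<delta>: "\<delta> > 0" using d r e \<rho> K by (simp add: \<delta>_def)
    show "\<exists>\<delta>>0. \<forall>x'. 0 < norm (x' - z1) \<and> norm (x' - z1) < \<delta> \<longrightarrow>
            cmod (Df F x' v - Df F z1 v - \<Lambda> (x' - z1)) / norm (x' - z1) < e"
    proof (intro exI[of _ \<delta>] conjI allI impI \<delta>)
      fix x' assume h: "0 < norm (x' - z1) \<and> norm (x' - z1) < \<delta>"
      define y where "y = x' - z1"
      have x': "x' = z1 + y" by (simp add: y_def)
      have ny: "norm y < min d (r/2)" "norm y < e * \<rho> / (K + 1)" "norm y > 0"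
        using h by (auto simp: y_def \<delta>_def)
      have "cmod (Df F x' v - Df F z1 v - \<Lambda> (x' - z1)) / norm y \<le> (K * (norm y)^2 / \<rho>) / norm y"
        using divide_right_mono[OF est[OF ny(1)], of "norm y"] ny(3) unfolding x' by simp
      also have "\<dots> = K * norm y / \<rho>" using ny(3) by (simp add: power2_eq_square)
      also have "\<dots> < e"
      proof -
        have "(K + 1) * norm y < e * \<rho>" using ny(2) K by (simp add: field_simps)
        then have "K * norm y < e * \<rho>" using ny(3) by (simp add: algebra_simps) (smt (verit) norm_ge_zero)
        then show ?thesis using \<rho> by (simp add: pos_divide_less_eq)
      qed
      finally show "cmod (Df F x' v - Df F z1 v - \<Lambda> (x' - z1)) / norm (x' - z1) < e" by (simp add: y_def)
    qed
  qed
  then show "\<exists>L. ((\<lambda>z. Df F z v) has_derivative L) (at z1) \<and> (\<forall>c v. L (c *s v) = c * L v)"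
    using Lsc by blast
qed



lemma basept_joinv[simp]: "basept (joinv x a) = x"
  by (simp add: basept_def joinv_def vec_eq_iff)

lemma fibpt_joinv[simp]: "fibpt (joinv x a) = a"
  by (simp add: fibpt_def joinv_def vec_eq_iff)

lemma joinv_split: "joinv x (t *s a) = joinv x 0 + t *s joinv 0 a"
  by (simp add: joinv_def vec_eq_iff split: sum.splits)

lemma joinv_smult0: "joinv (c *s x) (0::complex^'r::finite) = c *s joinv (x::complex^'n::finite) 0"
  by (simp add: joinv_def vec_eq_iff split: sum.splits)

lemma bl_P: "bounded_linear (\<lambda>x::complex^'n::finite. joinv x (0::complex^'r::finite))"
proof -
  have "linear (\<lambda>x::complex^'n. joinv x (0::complex^'r))"
    by (rule linearI) (simp_all add: joinv_def vec_eq_iff split: sum.splits)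
  thus ?thesis using linear_conv_bounded_linear by blast
qed

lemma holo_compP:
  assumes "holo_on V psi"
  shows "holo_on {x. joinv x (0::complex^'r::finite) \<in> V} (\<lambda>x::complex^'n::finite. psi (joinv x 0))"
  unfolding holo_on_def
proof (intro ballI)
  fix x :: "complex^'n" assume "x \<in> {x. joinv x (0::complex^'r) \<in> V}"
  then have xv: "joinv x (0::complex^'r) \<in> V" by simp
  obtain L where L: "(psi has_derivative L) (at (joinv x 0))" "\<And>c v. L (c *s v) = c * L v"
    using assms xv unfolding holo_on_def by blast
  have "((\<lambda>x. psi (joinv x (0::complex^'r))) has_derivative (\<lambda>h. L (joinv h 0))) (at x)"
    using diff_chain_at[OF bounded_linear_imp_has_derivative[OF bl_P] L(1)] by (simp add: o_def)
  moreover have "L (joinv (c *s h) (0::complex^'r)) = c * L (joinv h 0)" for c h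
    using L(2) joinv_smult0 by metis
  ultimately show "\<exists>L. ((\<lambda>x. psi (joinv x (0::complex^'r))) has_derivative L) (at x) \<and> (\<forall>c v. L (c *s v) = c * L v)"
    by blast
qed

lemma hnorm2_smult: "hnorm2 A (t *s a) = (cmod t)^2 * hnorm2 A a"
proof -
  have "(\<Sum>j\<in>UNIV. \<Sum>k\<in>UNIV. cnj ((t *s a) $ j) * A $ j $ k * (t *s a) $ k)
      = (t * cnj t) * (\<Sum>j\<in>UNIV. \<Sum>k\<in>UNIV. cnj (a $ j) * A $ j $ k * a $ k)"
    by (simp add: sum_distrib_left algebra_simps)
  also have "t * cnj t = of_real ((cmod t)^2)" by (rule complex_norm_square[symmetric])
  finally show ?thesis unfolding hnorm2_def by simp
qed

lemma hnorm2_zero: "hnorm2 A 0 = 0"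
  by (simp add: hnorm2_def)

lemma joinv0_sum: "joinv (0::complex^'n::finite) (a::complex^'r::finite) = (\<Sum>j\<in>UNIV. a $ j *s joinv 0 (axis j 1))"
proof -
  have "joinv (0::complex^'n) a $ i = (\<Sum>j\<in>UNIV. a $ j *s joinv (0::complex^'n) (axis j (1::complex))) $ i" for i
  proof (cases i)
    case (Inl l) then show ?thesis by (simp add: joinv_def sum_component)
  next
    case (Inr k)
    have "(\<Sum>j\<in>UNIV. a $ j * axis j (1::complex) $ k) = a $ k"
      by (simp add: axis_def if_distrib sum.delta cong: if_cong)
    then show ?thesis using Inr by (simp add: joinv_def sum_component)
  qed
  then show ?thesis by (simp add: vec_eq_iff)
qed

lemma tendsto_sum_list_map:
  assumes "\<And>F. F \<in> set xs \<Longrightarrow> ((\<lambda>t. f F t) \<longlongrightarrow> l F) net"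
  shows "((\<lambda>t. \<Sum>F\<leftarrow>xs. f F t) \<longlongrightarrow> (\<Sum>F\<leftarrow>xs. l F :: real)) net"
  using assms by (induction xs) (auto intro!: tendsto_add)

lemma sum_list_map_divide:
  "(\<Sum>F\<leftarrow>xs. f F / (c::real)) = (\<Sum>F\<leftarrow>xs. f F) / c"
  by (induction xs) (auto simp: add_divide_distrib)

lemma sum_list_zero_nonneg:
  assumes "\<And>F. F \<in> set xs \<Longrightarrow> f F \<ge> (0::real)" "(\<Sum>F\<leftarrow>xs. f F) = 0" "F \<in> set xs"
  shows "f F = 0"
  using assms
proof (induction xs)
  case Nil then show ?case by simp
next
  case (Cons a xs)
  have "0 \<le> (\<Sum>F\<leftarrow>xs. f F)" using Cons.prems(1) by (intro sum_list_nonneg) auto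
  moreover have "0 \<le> f a" using Cons.prems(1) by simp
  ultimately have "f a = 0" "(\<Sum>F\<leftarrow>xs. f F) = 0" using Cons.prems(2) by auto
  then show ?case using Cons by auto
qed

lemma sum_sq_le_sq_sum:
  assumes "\<And>F. F \<in> set xs \<Longrightarrow> f F \<ge> (0::real)"
  shows "(\<Sum>F\<leftarrow>xs. (f F)^2) \<le> (\<Sum>F\<leftarrow>xs. f F)^2"
  using assms
proof (induction xs)
  case Nil then show ?case by simp
next
  case (Cons a xs)
  have S: "0 \<le> (\<Sum>F\<leftarrow>xs. f F)" using Cons.prems by (intro sum_list_nonneg) auto
  have a: "0 \<le> f a" using Cons.prems by simp
  have "(\<Sum>F\<leftarrow>xs. (f F)^2) \<le> (\<Sum>F\<leftarrow>xs. f F)^2" using Cons by simp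
  moreover have "0 \<le> f a * (2 * (\<Sum>F\<leftarrow>xs. f F))" using S a by simp
  ultimately show ?case by (simp add: power2_eq_square algebra_simps)
qed

lemma sq_sum_le_len:
  "(\<Sum>F\<leftarrow>xs. f F)^2 \<le> real (length xs) * (\<Sum>F\<leftarrow>xs. (f F :: real)^2)"
proof -
  have e1: "(\<Sum>F\<leftarrow>xs. f F) = (\<Sum>i\<in>{0..<length xs}. f (xs ! i))"
    by (subst sum_list_sum_nth) simp
  have e2: "(\<Sum>F\<leftarrow>xs. (f F)^2) = (\<Sum>i\<in>{0..<length xs}. (f (xs ! i))^2)"
    by (subst sum_list_sum_nth) simp
  show ?thesis unfolding e1 e2
    using sum_squared_le_sum_of_squares[of "\<lambda>i. f (xs ! i)" "{0..<length xs}"] by (simp add: mult.commute)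
qed



theorem lemma3p7:
  fixes \<Omega> :: "(complex ^ 'n) set"
    and H :: "complex ^ 'n \<Rightarrow> complex ^ 'r ^ 'r"
    and x0 :: "complex ^ 'n"
  assumes "open \<Omega>" and "x0 \<in> \<Omega>"
    and "\<forall>x\<in>\<Omega>. herm_psd (H x)"
    and "qas_on (total_space \<Omega> :: (complex ^ ('n + 'r)) set)
           (\<lambda>w. elog (hnorm2 (H (basept w)) (fibpt w)))"
  shows "\<exists>U G fs C. open U \<and> x0 \<in> U \<and> U \<subseteq> \<Omega> \<and>
     (\<forall>j k. holo_on U (\<lambda>x. G x $ j $ k)) \<and> (\<forall>x\<in>U. invertible (G x)) \<and>
     (\<forall>f\<in>set (fs :: (complex ^ 'n \<Rightarrow> complex ^ 'r) list). \<forall>j. holo_on U (\<lambda>x. f x $ j)) \<and>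
     C > (0::real) \<and>
     (\<forall>x\<in>U. \<forall>\<alpha>.
        (1 / C) * sqrt (hnorm2 (H x) (G x *v \<alpha>)) \<le> (\<Sum>f\<leftarrow>fs. cmod (cdot (f x) \<alpha>)) \<and>
        (\<Sum>f\<leftarrow>fs. cmod (cdot (f x) \<alpha>)) \<le> C * sqrt (hnorm2 (H x) (G x *v \<alpha>)))"
proof -
  define p where "p = joinv x0 (0::complex^'r)"
  have pT: "p \<in> (total_space \<Omega> :: (complex ^ ('n + 'r)) set)"
    using assms(2) by (simp add: p_def total_space_def)
  obtain V fs b where V: "open V" "p \<in> V" "V \<subseteq> (total_space \<Omega> :: (complex ^ ('n + 'r)) set)"
    and hol: "\<forall>f\<in>set fs. holo_on V f" and bb: "bounded (b ` V)"
    and eq: "\<forall>z\<in>V. elog (hnorm2 (H (basept z)) (fibpt z)) = elog (\<Sum>f\<leftarrow>fs. (cmod (f z))\<^sup>2) + ereal (b z)"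
    using assms(4) pT unfolding qas_on_def by blast
  obtain B where B: "\<And>z. z \<in> V \<Longrightarrow> norm (b z) \<le> B" using bb unfolding bounded_iff by auto
  define S where "S = (\<lambda>z. \<Sum>f\<leftarrow>fs. (cmod (f z))\<^sup>2)"
  have Snn: "S z \<ge> 0" for z unfolding S_def by (intro sum_list_nonneg) auto
  have heq: "hnorm2 (H (basept z)) (fibpt z) = exp (b z) * S z" if zV: "z \<in> V" for z
  proof -
    have bz: "basept z \<in> \<Omega>" using V(3) zV by (auto simp: total_space_def)
    have hnn: "hnorm2 (H (basept z)) (fibpt z) \<ge> 0"
      using assms(3) bz unfolding herm_psd_def hnorm2_def by blast
    have e: "elog (hnorm2 (H (basept z)) (fibpt z)) = elog (S z) + ereal (b z)"
      using eq zV unfolding S_def by blast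
    show ?thesis
    proof (cases "hnorm2 (H (basept z)) (fibpt z) = 0")
      case True
      then have "elog (S z) + ereal (b z) = - \<infinity>" using e by (simp add: elog_def)
      then have "S z = 0" by (cases "S z = 0") (auto simp: elog_def)
      then show ?thesis using True by simp
    next
      case False
      then have hp: "hnorm2 (H (basept z)) (fibpt z) > 0" using hnn by simp
      have Sn: "S z \<noteq> 0"
      proof
        assume "S z = 0"
        then have "elog (S z) + ereal (b z) = - \<infinity>" by (simp add: elog_def)
        with e False show False by (simp add: elog_def)
      qed
      then have sp: "S z > 0" using Snn[of z] by simp
      from e False Sn have "ln (hnorm2 (H (basept z)) (fibpt z)) = ln (S z) + b z"
        by (simp add: elog_def)
      then have "hnorm2 (H (basept z)) (fibpt z) = exp (ln (S z) + b z)" using hp by (metis exp_ln)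
      then show ?thesis using sp by (simp add: exp_add)
    qed
  qed
  define U where "U = {x. joinv x (0::complex^'r) \<in> V}"
  have contP: "continuous_on UNIV (\<lambda>x::complex^'n. joinv x (0::complex^'r))"
    using linear_continuous_on[OF bl_P] by blast
  have Uopen: "open U"
    using open_vimage[OF V(1) contP] by (simp add: U_def vimage_def)
  have x0U: "x0 \<in> U" using V(2) by (simp add: U_def p_def)
  have UO: "U \<subseteq> \<Omega>" using V(3) by (auto simp: U_def total_space_def)
  define ej where "ej = (\<lambda>j::'r. joinv (0::complex^'n) (axis j (1::complex)))"
  define fs' where "fs' = map (\<lambda>F. \<lambda>x. \<chi> j. Df F (joinv x (0::complex^'r)) (ej j)) fs"
  define E where "E = exp B"
  have E: "E > 0" by (simp add: E_def)
  have key: "hnorm2 (H x) \<alpha> \<le> E * (\<Sum>F\<leftarrow>fs. (cmod (Df F (joinv x 0) (joinv 0 \<alpha>)))^2) \<and>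
             (\<Sum>F\<leftarrow>fs. (cmod (Df F (joinv x 0) (joinv 0 \<alpha>)))^2) \<le> E * hnorm2 (H x) \<alpha>"
    if xU: "x \<in> U" for x \<alpha>
  proof -
    define w where "w = joinv x (0::complex^'r)"
    define u where "u = joinv (0::complex^'n) \<alpha>"
    have wV: "w \<in> V" using xU by (simp add: U_def w_def)
    have pt: "w + t *s u = joinv x (t *s \<alpha>)" for t by (simp add: w_def u_def joinv_split)
    have w0: "w + 0 *s u = w" by (simp add: vec_eq_iff)
    have Fw0: "F w = 0" if "F \<in> set fs" for F
    proof -
      have "hnorm2 (H x) 0 = exp (b w) * S w" using heq[OF wV] by (simp add: w_def)
      then have "S w = 0" by (simp add: hnorm2_zero)
      then have "(cmod (F w))^2 = 0"
        using sum_list_zero_nonneg[of fs "\<lambda>F. (cmod (F w))^2" F] that by (simp add: S_def)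
      then show ?thesis by simp
    qed
    have lim1: "((\<lambda>t. F (w + t *s u) / t) \<longlongrightarrow> Df F w u) (at 0)" if "F \<in> set fs" for F
    proof -
      have "((\<lambda>t. F (w + t *s u)) has_field_derivative Df F (w + 0 *s u) u) (at 0)"
        by (rule holo_line) (use hol that wV w0 in auto)
      then have "((\<lambda>t. F (w + t *s u)) has_field_derivative Df F w u) (at 0)" using w0 by simp
      then show ?thesis unfolding has_field_derivative_iff using Fw0[OF that] w0 by simp
    qed
    define Q where "Q = (\<lambda>t. \<Sum>F\<leftarrow>fs. (cmod (F (w + t *s u) / t))^2)"
    define L where "L = (\<Sum>F\<leftarrow>fs. (cmod (Df F w u))^2)"
    have limQ: "(Q \<longlongrightarrow> L) (at 0)"
      unfolding Q_def L_def by (intro tendsto_sum_list_map tendsto_power tendsto_norm lim1)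
    have ev: "\<forall>\<^sub>F t in at 0. w + t *s u \<in> V"
    proof -
      have "isCont (\<lambda>t. w + t *s u) 0" by (intro continuous_intros linear_continuous_at bl_smult)
      then have "((\<lambda>t. w + t *s u) \<longlongrightarrow> w) (at 0)" using w0 by (simp add: isCont_def)
      then show ?thesis using topological_tendstoD V(1) wV by blast
    qed
    have hnn: "hnorm2 (H x) \<alpha> \<ge> 0" using assms(3) UO xU unfolding herm_psd_def hnorm2_def by blast
    have Qnn: "Q t \<ge> 0" for t unfolding Q_def by (intro sum_list_nonneg) auto
    have evh: "\<forall>\<^sub>F t in at (0::complex). hnorm2 (H x) \<alpha> = exp (b (w + t *s u)) * Q t \<and> w + t *s u \<in> V"
      using eventually_conj[OF ev eventually_neq_at_within[where x="0::complex"]]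
    proof (rule eventually_mono)
      fix t assume t: "w + t *s u \<in> V \<and> t \<noteq> 0"
      have "(cmod t)^2 * hnorm2 (H x) \<alpha> = exp (b (w + t *s u)) * S (w + t *s u)"
        using heq[of "w + t *s u"] t by (simp add: pt hnorm2_smult)
      moreover have "Q t = S (w + t *s u) / (cmod t)^2"
        unfolding Q_def S_def by (simp add: norm_divide power_divide sum_list_map_divide)
      moreover have "(cmod t)^2 \<noteq> 0" using t by simp
      ultimately have "(hnorm2 (H x) \<alpha> - exp (b (w + t *s u)) * Q t) * (cmod t)^2 = 0"
        by (simp add: algebra_simps)
      then show "hnorm2 (H x) \<alpha> = exp (b (w + t *s u)) * Q t \<and> w + t *s u \<in> V"
        using t by simp
    qed
    have bz: "exp (b z) \<le> E" "exp (- b z) \<le> E" if "z \<in> V" for z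
      using B[OF that] by (auto simp: E_def abs_le_iff)
    have up: "hnorm2 (H x) \<alpha> \<le> E * L"
    proof (rule tendsto_le[OF _ tendsto_mult[OF tendsto_const limQ] tendsto_const])
      show "at (0::complex) \<noteq> bot" by simp
      show "\<forall>\<^sub>F t in at 0. hnorm2 (H x) \<alpha> \<le> E * Q t"
        using evh
      proof (rule eventually_mono)
        fix t assume t: "hnorm2 (H x) \<alpha> = exp (b (w + t *s u)) * Q t \<and> w + t *s u \<in> V"
        then show "hnorm2 (H x) \<alpha> \<le> E * Q t" using mult_right_mono[OF bz(1) Qnn] by auto
      qed
    qed
    have lo: "L \<le> E * hnorm2 (H x) \<alpha>"
    proof (rule tendsto_le[OF _ tendsto_const limQ])
      show "at (0::complex) \<noteq> bot" by simp
      show "\<forall>\<^sub>F t in at 0. Q t \<le> E * hnorm2 (H x) \<alpha>"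
        using evh
      proof (rule eventually_mono)
        fix t assume t: "hnorm2 (H x) \<alpha> = exp (b (w + t *s u)) * Q t \<and> w + t *s u \<in> V"
        have zV: "w + t *s u \<in> V" using t by blast
        have q: "Q t = exp (- b (w + t *s u)) * hnorm2 (H x) \<alpha>" using t by (simp add: exp_minus field_simps)
        have m: "exp (- b (w + t *s u)) * hnorm2 (H x) \<alpha> \<le> E * hnorm2 (H x) \<alpha>"
          by (rule mult_right_mono[OF bz(2)[OF zV] hnn])
        show "Q t \<le> E * hnorm2 (H x) \<alpha>" unfolding q by (rule m)
      qed
    qed
    show ?thesis using up lo by (simp add: L_def w_def u_def)
  qed
  define C where "C = (sqrt (real (length fs)) + 1) * sqrt E"
  have C: "C > 0" using E by (simp add: C_def add_nonneg_pos)
  have G1: "\<forall>j k. holo_on U (\<lambda>x. (mat 1 :: complex^'r^'r) $ j $ k)"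
    unfolding holo_on_def by (auto intro!: exI[of _ "\<lambda>_. 0"] has_derivative_const)
  have G2: "\<forall>x\<in>U. invertible (mat 1 :: complex^'r^'r)" by (simp add: invertible_def)
  have G3: "\<forall>f\<in>set fs'. \<forall>j. holo_on U (\<lambda>x. f x $ j)"
  proof (intro ballI allI)
    fix f j assume "f \<in> set fs'"
    then obtain F where F: "F \<in> set fs" "f = (\<lambda>x. \<chi> j. Df F (joinv x (0::complex^'r)) (ej j))"
      unfolding fs'_def by auto
    have "holo_on U (\<lambda>x. Df F (joinv x (0::complex^'r)) (ej j))"
      unfolding U_def by (rule holo_compP[OF holo_dir_deriv[OF _ V(1)]]) (use hol F in auto)
    then show "holo_on U (\<lambda>x. f x $ j)" using F by simp
  qed
  have G4: "(1 / C) * sqrt (hnorm2 (H x) ((mat 1 :: complex^'r^'r) *v \<alpha>)) \<le> (\<Sum>f\<leftarrow>fs'. cmod (cdot (f x) \<alpha>)) \<and>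
        (\<Sum>f\<leftarrow>fs'. cmod (cdot (f x) \<alpha>)) \<le> C * sqrt (hnorm2 (H x) ((mat 1 :: complex^'r^'r) *v \<alpha>))"
    if xU: "x \<in> U" for x \<alpha>
  proof -
    have wV: "joinv x (0::complex^'r) \<in> V" using xU by (simp add: U_def)
    have cd: "cdot (\<chi> j. Df F (joinv x (0::complex^'r)) (ej j)) \<alpha> = Df F (joinv x 0) (joinv 0 \<alpha>)"
      if "F \<in> set fs" for F
    proof -
      have lin: "linear (Df F (joinv x (0::complex^'r)))" using holo_D_lin[OF _ wV] hol that by blast
      have "Df F (joinv x 0) (joinv 0 \<alpha>) = Df F (joinv x 0) (\<Sum>j\<in>UNIV. \<alpha> $ j *s ej j)"
        by (simp add: ej_def joinv0_sum[symmetric])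
      also have "\<dots> = (\<Sum>j\<in>UNIV. Df F (joinv x 0) (\<alpha> $ j *s ej j))" by (rule linear_sum[OF lin])
      also have "\<dots> = (\<Sum>j\<in>UNIV. \<alpha> $ j * Df F (joinv x 0) (ej j))"
        using holo_D(2)[OF _ wV] hol that by simp
      finally show ?thesis by (simp add: cdot_def mult.commute)
    qed
    define a where "a = (\<lambda>F. cmod (Df F (joinv x (0::complex^'r)) (joinv 0 \<alpha>)))"
    define T where "T = (\<Sum>F\<leftarrow>fs. a F)"
    define Sq where "Sq = (\<Sum>F\<leftarrow>fs. (a F)^2)"
    define h where "h = hnorm2 (H x) \<alpha>"
    have sumeq: "(\<Sum>f\<leftarrow>fs'. cmod (cdot (f x) \<alpha>)) = T"
      unfolding fs'_def T_def a_def by (simp add: o_def cd cong: map_cong)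
    have k: "h \<le> E * Sq" "Sq \<le> E * h" using key[OF xU, of \<alpha>] by (simp_all add: h_def Sq_def a_def)
    have hnn: "h \<ge> 0" using assms(3) UO xU unfolding herm_psd_def hnorm2_def h_def by blast
    have Tnn: "T \<ge> 0" unfolding T_def a_def by (intro sum_list_nonneg) auto
    have Sqnn: "Sq \<ge> 0" unfolding Sq_def by (intro sum_list_nonneg) auto
    have s1: "Sq \<le> T^2" unfolding Sq_def T_def by (rule sum_sq_le_sq_sum) (simp add: a_def)
    have s2: "T^2 \<le> real (length fs) * Sq" unfolding Sq_def T_def by (rule sq_sum_le_len)
    have sqSq: "sqrt Sq \<le> T" using real_sqrt_le_mono[OF s1] Tnn by simp
    have i1: "sqrt h \<le> C * T"
    proof -
      have "sqrt h \<le> sqrt (E * Sq)" using k(1) by (rule real_sqrt_le_mono)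
      also have "\<dots> = sqrt E * sqrt Sq" by (simp add: real_sqrt_mult)
      also have "\<dots> \<le> sqrt E * T" using sqSq E by (intro mult_left_mono) auto
      also have "\<dots> \<le> C * T"
        using Tnn E unfolding C_def by (intro mult_right_mono) (auto simp: algebra_simps)
      finally show ?thesis .
    qed
    have i2: "T \<le> C * sqrt h"
    proof -
      have "T = sqrt (T^2)" using Tnn by simp
      also have "\<dots> \<le> sqrt (real (length fs) * Sq)" using s2 by (rule real_sqrt_le_mono)
      also have "\<dots> = sqrt (real (length fs)) * sqrt Sq" by (simp add: real_sqrt_mult)
      also have "\<dots> \<le> sqrt (real (length fs)) * sqrt (E * h)"
        using k(2) by (intro mult_left_mono real_sqrt_le_mono) auto
      also have "\<dots> = sqrt (real (length fs)) * sqrt E * sqrt h" by (simp add: real_sqrt_mult)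
      also have "\<dots> \<le> C * sqrt h"
        using hnn E unfolding C_def by (intro mult_right_mono) (auto simp: algebra_simps)
      finally show ?thesis .
    qed
    have "(1 / C) * sqrt h \<le> T" using i1 C by (simp add: field_simps)
    then show ?thesis using i2 sumeq by (simp add: h_def)
  qed
  show ?thesis
    apply (rule exI[of _ U], rule exI[of _ "\<lambda>x. mat 1 :: complex^'r^'r"], rule exI[of _ fs'], rule exI[of _ C])
    using Uopen x0U UO G1 G2 G3 C G4 by blast
qed

end
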